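(* (1) Any two distinct Bernoulli measures on $\Sigma^\mathbb{Z}$ induce distinct topologies on $\mathtt{CA}$ via the pseudometrics $\delta^\mu$. (2) If $\mu_p$ is a Bernoulli measure and $\nu\ne\mu_p$ is a shift-invariant Borel probability measure on $\Sigma^\mathbb{Z}$, then the topology induced by $\delta^\nu$ on $\mathtt{CA}$ differs from that induced by $\delta^{\mu_p}$.
   Context: $\Sigma$ is a finite alphabet with $|\Sigma|\ge2$. A cellular automaton (CA) is a continuous map $c:\Sigma^\mathbb{Z}\to\Sigma^\mathbb{Z}$ commuting with the shift; $\mathtt{CA}$ is the set of all CA. For $p:\Sigma\to[0,1]$ with $\sum_a p(a)=1$, the Bernoulli measure $\mu_p$ is the Borel probability measure with $\mu_p(\{x\mid x_{[n,n+|w|-1]}=w\})=\prod_{i=0}^{|w|-1}p(w_i)$ for all words $w$ and $n\in\mathbb{Z}$. For a Borel probability measure $\mu$, $\delta^\mu(c,d)=\mu(\{x\mid c(x)_0\ne d(x)_0\})$. *)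

theory Defs
  imports "HOL-Probability.Probability"
begin

definition cfg_top :: "(int \<Rightarrow> 'a) topology" where
  "cfg_top = product_topology (\<lambda>_. discrete_topology UNIV) UNIV"

definition shift :: "(int \<Rightarrow> 'a) \<Rightarrow> (int \<Rightarrow> 'a)" where
  "shift x = (\<lambda>i. x (i + 1))"

definition CA :: "((int \<Rightarrow> 'a) \<Rightarrow> (int \<Rightarrow> 'a)) set" where
  "CA = {c. continuous_map cfg_top cfg_top c \<and> (\<forall>x. c (shift x) = shift (c x))}"

definition borel_prob :: "(int \<Rightarrow> 'a) measure \<Rightarrow> bool" where
  "borel_prob M \<longleftrightarrow> prob_space M \<and> space M = UNIV \<and>
     sets M = sigma_sets UNIV {U. openin cfg_top U}"

definition shift_invariant :: "(int \<Rightarrow> 'a) measure \<Rightarrow> bool" where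
  "shift_invariant M \<longleftrightarrow> (\<forall>A\<in>sets M. measure M (shift -` A) = measure M A)"

definition prob_vector :: "('a::finite \<Rightarrow> real) \<Rightarrow> bool" where
  "prob_vector p \<longleftrightarrow> (\<forall>a. 0 \<le> p a) \<and> (\<Sum>a\<in>UNIV. p a) = 1"

definition bernoulli_measure :: "('a::finite \<Rightarrow> real) \<Rightarrow> (int \<Rightarrow> 'a) measure \<Rightarrow> bool" where
  "bernoulli_measure p M \<longleftrightarrow> prob_vector p \<and> borel_prob M \<and>
     (\<forall>(w::'a list) (n::int).
        measure M {x. \<forall>i<length w. x (n + int i) = w ! i} = (\<Prod>i<length w. p (w ! i)))"

definition delta :: "(int \<Rightarrow> 'a) measure \<Rightarrow> ((int \<Rightarrow> 'a) \<Rightarrow> (int \<Rightarrow> 'a)) \<Rightarrow>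
    ((int \<Rightarrow> 'a) \<Rightarrow> (int \<Rightarrow> 'a)) \<Rightarrow> real" where
  "delta M c d = measure M {x. c x 0 \<noteq> d x 0}"

definition delta_open_sets :: "(int \<Rightarrow> 'a) measure \<Rightarrow> ((int \<Rightarrow> 'a) \<Rightarrow> (int \<Rightarrow> 'a)) set set" where
  "delta_open_sets M = {U. U \<subseteq> CA \<and>
     (\<forall>c\<in>U. \<exists>e>0. \<forall>d\<in>CA. delta M c d < e \<longrightarrow> d \<in> U)}"

end

theory Submission
  imports Defs
begin


lemma topspace_cfg [simp]: "topspace cfg_top = UNIV"
  by (simp add: cfg_top_def)

lemma open_cyl_gen:
  assumes "finite J"
  shows "openin cfg_top {y. \<forall>j\<in>J. y j = x j}"
proof -
  have eq: "{y. \<forall>j\<in>J. y j = x j} = Pi\<^sub>E UNIV (\<lambda>j. if j\<in>J then {x j} else UNIV)"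
    by (auto simp: PiE_iff split: if_splits)
  have "finite {i. (if i\<in>J then {x i} else UNIV) \<noteq> (UNIV::'a set)}"
    by (rule finite_subset[OF _ assms]) auto
  then show ?thesis unfolding eq cfg_top_def
    by (subst openin_PiE_gen) auto
qed

lemma open_findep:
  assumes "finite J" and "\<And>x y. (\<forall>j\<in>J. x j = y j) \<Longrightarrow> x \<in> S \<Longrightarrow> y \<in> S"
  shows "openin cfg_top S"
proof (subst openin_subopen, intro ballI)
  fix x assume "x \<in> S"
  show "\<exists>T. openin cfg_top T \<and> x \<in> T \<and> T \<subseteq> S"
  proof (rule exI[of _ "{y. \<forall>j\<in>J. y j = x j}"], intro conjI)
    show "openin cfg_top {y. \<forall>j\<in>J. y j = x j}" by (rule open_cyl_gen[OF assms(1)])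
    show "{y. \<forall>j\<in>J. y j = x j} \<subseteq> S" using assms(2)[of x] \<open>x\<in>S\<close> by auto
  qed auto
qed

lemma open_in_sets: "borel_prob M \<Longrightarrow> openin cfg_top S \<Longrightarrow> S \<in> sets M"
  by (auto simp: borel_prob_def)

lemma cont_findep:
  fixes c :: "(int \<Rightarrow> 'a) \<Rightarrow> int \<Rightarrow> 'a"
  assumes "\<And>i. finite (J i)" and "\<And>i x y. (\<forall>j\<in>J i. x j = y j) \<Longrightarrow> c x i = c y i"
  shows "continuous_map cfg_top cfg_top c"
proof -
  have "continuous_map cfg_top (discrete_topology UNIV) (\<lambda>x. c x i)" for i
    unfolding continuous_map_openin_preimage_eq
  proof (intro conjI allI impI)
    fix U :: "'a set"
    show "openin cfg_top (topspace cfg_top \<inter> (\<lambda>x. c x i) -` U)"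
      by (rule open_findep[OF assms(1)[of i]]) (use assms(2)[of i] in force)
  qed auto
  then show ?thesis
    by (subst (2) cfg_top_def) (simp add: continuous_map_componentwise_UNIV)
qed

lemma CA_coord_cont:
  assumes "c \<in> CA" shows "openin cfg_top {x. c x 0 \<in> U}"
proof -
  have "continuous_map cfg_top cfg_top c" using assms by (simp add: CA_def)
  moreover have "continuous_map cfg_top (discrete_topology UNIV) (\<lambda>x. x 0)"
    unfolding cfg_top_def by (rule continuous_map_product_projection) auto
  ultimately have "continuous_map cfg_top (discrete_topology UNIV) (\<lambda>x. c x 0)"
    using continuous_map_compose[of cfg_top cfg_top c] by (auto simp: o_def)
  then have "openin cfg_top {x \<in> topspace cfg_top. c x 0 \<in> U}"
    by (rule openin_continuous_map_preimage) simp
  then show ?thesis by simp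
qed

lemma CA_diff_open:
  assumes "c \<in> CA" "d \<in> CA" shows "openin cfg_top {x. c x 0 \<noteq> d x 0}"
proof -
  have "{x. c x 0 \<noteq> d x 0} = (\<Union>a. {x. c x 0 \<in> {a}} \<inter> {x. d x 0 \<in> UNIV - {a}})" by auto
  moreover have "openin cfg_top (\<Union>a. {x. c x 0 \<in> {a}} \<inter> {x. d x 0 \<in> UNIV - {a}})"
  proof -
    have a1: "openin cfg_top {x. c x 0 = a}" for a using CA_coord_cont[OF assms(1), of "{a}"] by simp
    have a2: "openin cfg_top {x. d x 0 \<noteq> a}" for a using CA_coord_cont[OF assms(2), of "-{a}"] by simp
    show ?thesis by (intro openin_Union) (auto intro!: openin_Int a1 a2)
  qed
  ultimately show ?thesis by simp
qed



definition cyl :: "'a list \<Rightarrow> int \<Rightarrow> (int \<Rightarrow> 'a) set" where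
  "cyl w n = {x. \<forall>i<length w. x (n + int i) = w ! i}"

lemma Pw_eq: "(\<Prod>i<length w. p (w!i)) = prod_list (map p w)"
  by (simp add: prod.list_conv_set_nth atLeast0LessThan)

lemma sum_words:
  fixes p :: "'a::finite \<Rightarrow> real"
  shows "(\<Sum>z\<in>{z. length z = g}. prod_list (map p z)) = (sum p UNIV)^g"
proof (induction g)
  case 0
  then show ?case by simp
next
  case (Suc g)
  have eq: "{z. length z = Suc g} = (\<lambda>(a,z). a#z) ` (UNIV \<times> {z. length z = g})"
    by (auto simp: image_iff length_Suc_conv)
  have inj: "inj_on (\<lambda>(a,z). a#z) (UNIV \<times> {z::'a list. length z = g})"
    by (auto simp: inj_on_def)
  have fin: "finite {z::'a list. length z = g}"
    using finite_lists_length_eq[of "UNIV::'a set" g] by simp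
  have "(\<Sum>z\<in>{z. length z = Suc g}. prod_list (map p z))
      = (\<Sum>(a,z)\<in>UNIV \<times> {z. length z = g}. p a * prod_list (map p z))"
    unfolding eq by (subst sum.reindex[OF inj]) (simp add: case_prod_beta)
  also have "\<dots> = (\<Sum>a\<in>UNIV. \<Sum>z\<in>{z. length z = g}. p a * prod_list (map p z))"
    by (subst sum.cartesian_product) simp
  also have "\<dots> = (\<Sum>a\<in>UNIV. p a) * (sum p UNIV)^g"
    by (simp add: sum_distrib_left[symmetric] Suc sum_distrib_right)
  finally show ?case by simp
qed

lemma cyl_split:
  "cyl u n \<inter> cyl v (n + int (length u) + int g) = (\<Union>z\<in>{z. length z = g}. cyl (u @ z @ v) n)"
proof (intro equalityI subsetI)
  fix x assume x: "x \<in> cyl u n \<inter> cyl v (n + int (length u) + int g)"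
  define z where "z = map (\<lambda>i. x (n + int(length u) + int i)) [0..<g]"
  have "x \<in> cyl (u @ z @ v) n"
    unfolding cyl_def
  proof (intro CollectI allI impI)
    fix i assume i: "i < length (u @ z @ v)"
    consider "i < length u" | "length u \<le> i" "i < length u + g" | "length u + g \<le> i" by linarith
    then show "x (n + int i) = (u @ z @ v) ! i"
    proof cases
      case 1 then show ?thesis using x by (auto simp: cyl_def nth_append)
    next
      case 2 then show ?thesis by (auto simp: z_def nth_append)
    next
      case 3
      then have "i - length u - g < length v" using i by (simp add: z_def)
      with x have "x (n + int (length u) + int g + int (i - length u - g)) = v ! (i - length u - g)"
        by (auto simp: cyl_def)
      moreover have "n + int (length u) + int g + int (i - length u - g) = n + int i" using 3 by simp
      ultimately show ?thesis using 3 by (auto simp: z_def nth_append)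
    qed
  qed
  moreover have "length z = g" by (simp add: z_def)
  ultimately show "x \<in> (\<Union>z\<in>{z. length z = g}. cyl (u @ z @ v) n)" by blast
next
  fix x assume "x \<in> (\<Union>z\<in>{z. length z = g}. cyl (u @ z @ v) n)"
  then obtain z where z: "length z = g" "x \<in> cyl (u @ z @ v) n" by auto
  have "x \<in> cyl u n"
    unfolding cyl_def
  proof (intro CollectI allI impI)
    fix i assume "i < length u"
    then show "x (n + int i) = u ! i" using z by (auto simp: cyl_def nth_append dest!: spec[of _ i])
  qed
  moreover have "x \<in> cyl v (n + int (length u) + int g)"
    unfolding cyl_def
  proof (intro CollectI allI impI)
    fix i assume "i < length v"
    then have "x (n + int (length u + g + i)) = (u @ z @ v) ! (length u + g + i)"
      using z unfolding cyl_def by (auto dest!: spec[of _ "length u + g + i"])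
    then show "x (n + int (length u) + int g + int i) = v ! i" using z by (simp add: nth_append add.assoc)
  qed
  ultimately show "x \<in> cyl u n \<inter> cyl v (n + int (length u) + int g)" by simp
qed

lemma cyl_disj:
  assumes "length z = length z'" "z \<noteq> z'"
  shows "cyl (u @ z @ v) n \<inter> cyl (u @ z' @ v) n = {}"
proof -
  obtain i where i: "i < length z" "z ! i \<noteq> z' ! i" using assms list_eq_iff_nth_eq by blast
  show ?thesis
  proof (rule ccontr)
    assume "cyl (u @ z @ v) n \<inter> cyl (u @ z' @ v) n \<noteq> {}"
    then obtain x where "x \<in> cyl (u @ z @ v) n" "x \<in> cyl (u @ z' @ v) n" by auto
    then have "x (n + int (length u + i)) = (u @ z @ v) ! (length u + i)"
              "x (n + int (length u + i)) = (u @ z' @ v) ! (length u + i)"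
      using i assms(1) unfolding cyl_def by (auto dest!: spec[of _ "length u + i"])
    then show False using i assms(1) by (simp add: nth_append)
  qed
qed

lemma cyl_open: "openin cfg_top (cyl w n)"
  by (rule open_findep[of "(\<lambda>i. n + int i) ` {..<length w}"]) (auto simp: cyl_def)

lemma bern_cyl:
  assumes "bernoulli_measure p M"
  shows "measure M (cyl w n) = prod_list (map p w)"
  using assms unfolding bernoulli_measure_def cyl_def by (simp add: Pw_eq)

lemma bern_prob: "bernoulli_measure p M \<Longrightarrow> prob_space M"
  by (simp add: bernoulli_measure_def borel_prob_def)

lemma bern_pair:
  assumes B: "bernoulli_measure p M"
  shows "measure M (cyl u n \<inter> cyl v (n + int (length u) + int g)) = prod_list (map p u) * prod_list (map p v)"
proof -
  interpret prob_space M using bern_prob[OF B] .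
  have fin: "finite {z::'a list. length z = g}"
    using finite_lists_length_eq[of "UNIV::'a set" g] by simp
  have bp: "borel_prob M" using B by (simp add: bernoulli_measure_def)
  have "measure M (\<Union>z\<in>{z. length z = g}. cyl (u @ z @ v) n)
      = (\<Sum>z\<in>{z. length z = g}. measure M (cyl (u @ z @ v) n))"
    by (rule finite_measure_finite_Union[OF fin])
       (auto simp: disjoint_family_on_def intro!: cyl_disj open_in_sets[OF bp] cyl_open)
  also have "\<dots> = (\<Sum>z\<in>{z. length z = g}. prod_list (map p u) * prod_list (map p v) * prod_list (map p z))"
    by (simp add: bern_cyl[OF B] mult_ac)
  also have "\<dots> = prod_list (map p u) * prod_list (map p v) * (sum p UNIV)^g"
    by (simp add: sum_distrib_left[symmetric] sum_words)
  also have "sum p UNIV = 1" using B by (simp add: bernoulli_measure_def prob_vector_def)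
  finally show ?thesis by (simp add: cyl_split)
qed



lemma shift_cyl: "shift -` cyl w n = cyl w (n+1)"
  by (auto simp: shift_def cyl_def add_ac)

lemma shinv_cyl:
  assumes "borel_prob \<nu>" "shift_invariant \<nu>"
  shows "measure \<nu> (cyl w n) = measure \<nu> (cyl w 0)"
proof -
  have step: "measure \<nu> (cyl w (n+1)) = measure \<nu> (cyl w n)" for n
  proof -
    have "cyl w n \<in> sets \<nu>" by (rule open_in_sets[OF assms(1) cyl_open])
    then show ?thesis using assms(2) unfolding shift_invariant_def by (metis shift_cyl)
  qed
  show ?thesis
  proof (induction n rule: int_induct[where k=0])
    case base then show ?case by simp
  next
    case (step1 i) then show ?case using step[of i] by simp
  next
    case (step2 i) then show ?case using step[of "i - 1"] by simp
  qed
qed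

definition C :: "nat \<Rightarrow> (int \<Rightarrow> 'a) \<Rightarrow> (int \<Rightarrow> 'a) set" where
  "C k f = {x. \<forall>i. \<bar>i\<bar> \<le> int k \<longrightarrow> x i = f i}"

lemma C_cyl: "C k f = cyl (map (\<lambda>j. f (int j - int k)) [0..<2*k+1]) (- int k)"
proof (intro equalityI subsetI)
  fix x assume "x \<in> C k f"
  then show "x \<in> cyl (map (\<lambda>j. f (int j - int k)) [0..<2*k+1]) (- int k)"
    by (auto simp: C_def cyl_def simp del: upt_Suc)
next
  fix x assume x: "x \<in> cyl (map (\<lambda>j. f (int j - int k)) [0..<2*k+1]) (- int k)"
  show "x \<in> C k f" unfolding C_def
  proof (intro CollectI allI impI)
    fix i assume "\<bar>i\<bar> \<le> int k"
    then have "nat (i + int k) < 2*k+1" "- int k + int (nat (i + int k)) = i" by auto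
    then show "x i = f i" using x unfolding cyl_def by (auto simp del: upt_Suc dest!: spec[of _ "nat (i + int k)"])
  qed
qed

lemma C_Int:
  assumes "k \<le> k'"
  shows "C k f \<inter> C k' g = (if \<forall>i. \<bar>i\<bar> \<le> int k \<longrightarrow> f i = g i then C k' g else {})"
  using assms by (auto simp: C_def)

lemma open_C_cover:
  assumes "openin cfg_top U" "x \<in> U"
  shows "\<exists>k. C k x \<subseteq> U"
proof -
  from assms obtain V where V: "finite {i. V i \<noteq> (UNIV::'a set)}" "x \<in> Pi\<^sub>E UNIV V" "Pi\<^sub>E UNIV V \<subseteq> U"
    unfolding cfg_top_def openin_product_topology_alt by auto
  define F where "F = {i. V i \<noteq> (UNIV::'a set)}"
  define k where "k = (\<Sum>i\<in>F. nat \<bar>i\<bar>)"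
  have kb: "\<bar>i\<bar> \<le> int k" if "i \<in> F" for i
  proof -
    have "nat \<bar>i\<bar> \<le> k" unfolding k_def using V(1) that F_def by (intro member_le_sum) auto
    then show ?thesis by simp
  qed
  have "C k x \<subseteq> Pi\<^sub>E UNIV V"
  proof
    fix y assume y: "y \<in> C k x"
    show "y \<in> Pi\<^sub>E UNIV V"
    proof (simp add: PiE_iff, intro allI)
      fix i show "y i \<in> V i"
      proof (cases "i \<in> F")
        case True then show ?thesis using kb[OF True] y V(2) by (auto simp: C_def PiE_iff)
      next
        case False then show ?thesis by (auto simp: F_def)
      qed
    qed
  qed
  then show ?thesis using V(3) by blast
qed

lemma borel_eq:
  fixes M N :: "(int \<Rightarrow> 'a::finite) measure"
  assumes M: "borel_prob M" and N: "borel_prob N"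
    and eq: "\<And>w n. measure M (cyl w n) = measure N (cyl w n)"
  shows "M = N"
proof -
  interpret M: prob_space M using M by (simp add: borel_prob_def)
  interpret N: prob_space N using N by (simp add: borel_prob_def)
  define E :: "(int \<Rightarrow> 'a) set set" where "E = {C k f | k f. True} \<union> {{}}"
  have E_open: "X \<in> E \<Longrightarrow> openin cfg_top X" for X
    by (auto simp: E_def C_cyl intro: cyl_open)
  have cE: "countable E"
  proof -
    have "E \<subseteq> (\<lambda>(k::nat,w::'a list). cyl w (- int k)) ` UNIV \<union> {{}}"
      by (auto simp: E_def C_cyl)
    moreover have "countable ((\<lambda>(k::nat,w::'a list). cyl w (- int k)) ` UNIV \<union> {{}})" by simp
    ultimately show ?thesis using countable_subset by blast
  qed
  have sig: "sigma_sets UNIV {U. openin cfg_top U} = sigma_sets UNIV E"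
  proof (rule equalityI)
    show "sigma_sets UNIV {U. openin cfg_top U} \<subseteq> sigma_sets UNIV E"
    proof (rule sigma_sets_mono, rule subsetI)
      fix U :: "(int \<Rightarrow> 'a) set" assume "U \<in> {U. openin cfg_top U}"
      then have U: "openin cfg_top U" by simp
      have "U = \<Union>{X\<in>E. X \<subseteq> U}"
      proof (intro equalityI subsetI)
        fix x assume "x \<in> U"
        then obtain k where "C k x \<subseteq> U" using open_C_cover[OF U] by blast
        moreover have "x \<in> C k x" by (simp add: C_def)
        ultimately show "x \<in> \<Union>{X\<in>E. X \<subseteq> U}" by (auto simp: E_def)
      qed auto
      also have "\<dots> \<in> sigma_sets UNIV E"
        by (rule sigma_sets_UNION) (auto intro: countable_subset[OF _ cE])
      finally show "U \<in> sigma_sets UNIV E" .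
    qed
    show "sigma_sets UNIV E \<subseteq> sigma_sets UNIV {U. openin cfg_top U}"
      by (rule sigma_sets_mono') (auto intro: E_open)
  qed
  show ?thesis
  proof (rule measure_eqI_generator_eq_countable[where E=E and \<Omega>=UNIV and A="range (\<lambda>a. C 0 (\<lambda>_. a))"])
    show "Int_stable E"
    proof (rule Int_stableI)
      fix a b assume "a \<in> E" "b \<in> E"
      then consider "a = {}" | "b = {}" | k f k' g where "a = C k f" "b = C k' g"
        unfolding E_def by blast
      then show "a \<inter> b \<in> E"
      proof cases
        case 1 then show ?thesis by (simp add: E_def)
      next
        case 2 then show ?thesis by (simp add: E_def)
      next
        case 3
        show ?thesis
        proof (cases "k \<le> k'")
          case True then show ?thesis unfolding 3 C_Int[OF True] by (auto simp: E_def)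
        next
          case False then have "k' \<le> k" by simp
          then show ?thesis unfolding 3 Int_commute[of "C k f"] C_Int[OF \<open>k' \<le> k\<close>] by (auto simp: E_def)
        qed
      qed
    qed
    show "E \<subseteq> Pow UNIV" by simp
    show "emeasure M X = emeasure N X" if "X \<in> E" for X
      using that eq by (auto simp: E_def C_cyl M.emeasure_eq_measure N.emeasure_eq_measure)
    show "sets M = sigma_sets UNIV E" "sets N = sigma_sets UNIV E"
      using M N sig by (auto simp: borel_prob_def)
    show "range (\<lambda>a. C 0 (\<lambda>_. a)) \<subseteq> E" by (auto simp: E_def)
    show "\<Union>(range (\<lambda>a. C 0 (\<lambda>_. a))) = UNIV" by (auto simp: C_def)
    show "countable (range (\<lambda>a::'a. C 0 (\<lambda>_. a)))" by simp
    show "emeasure M a \<noteq> \<infinity>" for a by simp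
  qed
qed



context
  fixes p :: "'a::finite \<Rightarrow> real" and M :: "(int \<Rightarrow> 'a) measure" and w :: "'a list"
  assumes B: "bernoulli_measure p M"
begin

abbreviation "P \<equiv> prod_list (map p w)"
abbreviation "L \<equiv> length w"
definition AA :: "nat \<Rightarrow> (int \<Rightarrow> 'a) set" where "AA j = cyl w (int (j * L))"
definition XX :: "nat \<Rightarrow> (int \<Rightarrow> 'a) \<Rightarrow> real" where "XX n x = (\<Sum>j<n. indicator (AA j) x)"

lemma AA_pair: "measure M (AA j \<inter> AA k) = (if j = k then P else P * P)"
proof -
  have lt: "measure M (AA j \<inter> AA k) = P * P" if "j < k" for j k
  proof -
    have "int (k * L) = int (j * L) + int L + int ((k - j - 1) * L)"
      using that by (simp add: of_nat_mult[symmetric] of_nat_add[symmetric] del: of_nat_mult of_nat_add)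
                    (metis Suc_diff_Suc add_mult_distrib le_add_diff_inverse less_imp_le mult_Suc plus_1_eq_Suc add.assoc)
    then show ?thesis unfolding AA_def using bern_pair[OF B, of w "int (j*L)" w "(k - j - 1) * L"] by simp
  qed
  show ?thesis
  proof (cases "j = k")
    case True then show ?thesis by (simp add: AA_def bern_cyl[OF B])
  next
    case False
    then consider "j < k" | "k < j" by linarith
    then show ?thesis using lt[of j k] lt[of k j] False by cases (auto simp: Int_commute)
  qed
qed

lemma AA_meas: "measure M (AA j) = P"
  unfolding AA_def by (rule bern_cyl[OF B])

lemma AA_sets: "AA j \<in> sets M"
  using B by (auto simp: bernoulli_measure_def AA_def intro!: open_in_sets cyl_open)

lemma P_bounds: "0 \<le> P" "P \<le> 1"
proof -
  interpret prob_space M using bern_prob[OF B] .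
  show "0 \<le> P" "P \<le> 1" using bern_cyl[OF B, of w 0] by (metis measure_nonneg, metis prob_le_1)
qed

lemma second_moment: "(\<integral>x. (XX n x - real n * P)^2 \<partial>M) = real n * (P - P * P)"
proof -
  interpret prob_space M using bern_prob[OF B] .
  have [measurable]: "AA j \<in> sets M" for j by (rule AA_sets)
  have int: "integrable M (indicator (AA j) :: _ \<Rightarrow> real)" for j
    by (rule integrable_real_indicator) (auto simp: less_top[symmetric])
  have int2: "integrable M (indicator (AA j \<inter> AA k) :: _ \<Rightarrow> real)" for j k
    by (rule integrable_real_indicator) (auto simp: less_top[symmetric])
  have pt: "(XX n x - real n * P)^2 = (\<Sum>j<n. \<Sum>k<n.
      indicator (AA j \<inter> AA k) x - P * indicator (AA j) x - P * indicator (AA k) x + P * P)" for x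
  proof -
    have "XX n x - real n * P = (\<Sum>j<n. indicator (AA j) x - P)"
      by (simp add: XX_def sum_subtractf)
    then have "(XX n x - real n * P)^2 = (\<Sum>j<n. \<Sum>k<n. (indicator (AA j) x - P) * (indicator (AA k) x - P))"
      by (simp add: power2_eq_square sum_product)
    also have "\<dots> = (\<Sum>j<n. \<Sum>k<n.
      indicator (AA j \<inter> AA k) x - P * indicator (AA j) x - P * indicator (AA k) x + P * P)"
      by (intro sum.cong refl) (simp add: indicator_inter_arith algebra_simps)
    finally show ?thesis .
  qed
  have trm: "(\<integral>x. indicator (AA j \<inter> AA k) x - P * indicator (AA j) x - P * indicator (AA k) x + P * P \<partial>M)
      = (if j = k then P - P * P else 0)" for j k
  proof -
    have "(\<integral>x. indicator (AA j \<inter> AA k) x - P * indicator (AA j) x - P * indicator (AA k) x + P * P \<partial>M)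
      = measure M (AA j \<inter> AA k) - P * measure M (AA j) - P * measure M (AA k) + P * P"
      by (simp add: int int2 prob_space)
    also have "\<dots> = (if j = k then P - P * P else 0)"
      using AA_pair[of j k] AA_meas[of j] AA_meas[of k] by simp
    finally show ?thesis .
  qed
  have "(\<integral>x. (XX n x - real n * P)^2 \<partial>M) = (\<Sum>j<n. \<Sum>k<n. (if j = k then P - P * P else 0))"
  proof -
    define T where "T = (\<lambda>j k x. indicator (AA j \<inter> AA k) x - P * indicator (AA j) x - P * indicator (AA k) x + (P * P::real))"
    have iT: "integrable M (T j k)" for j k unfolding T_def using int int2 by simp
    have iS: "integrable M (\<lambda>x. \<Sum>k<n. T j k x)" for j using iT by simp
    have "(\<integral>x. (XX n x - real n * P)^2 \<partial>M) = (\<integral>x. (\<Sum>j<n. \<Sum>k<n. T j k x) \<partial>M)"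
      unfolding pt T_def ..
    also have "\<dots> = (\<Sum>j<n. \<integral>x. (\<Sum>k<n. T j k x) \<partial>M)" by (rule Bochner_Integration.integral_sum[OF iS])
    also have "\<dots> = (\<Sum>j<n. \<Sum>k<n. \<integral>x. T j k x \<partial>M)" by (simp only: Bochner_Integration.integral_sum[OF iT])
    also have "\<dots> = (\<Sum>j<n. \<Sum>k<n. (if j = k then P - P * P else 0))" unfolding T_def trm ..
    finally show ?thesis .
  qed
  also have "\<dots> = real n * (P - P * P)" by simp
  finally show ?thesis .
qed

definition GG :: "nat \<Rightarrow> real \<Rightarrow> (int \<Rightarrow> 'a) set" where
  "GG n eps = {x. real n * eps < \<bar>XX n x - real n * P\<bar>}"

lemma XX_bounds: "0 \<le> XX n x" "XX n x \<le> real n"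
proof -
  show "0 \<le> XX n x" unfolding XX_def by (intro sum_nonneg) simp
  have "XX n x \<le> (\<Sum>j<n. 1)" unfolding XX_def by (intro sum_mono) (simp add: indicator_def)
  then show "XX n x \<le> real n" by simp
qed

lemma XX_findep:
  assumes "\<forall>j\<in>int ` {..<n*L}. x j = y j"
  shows "XX n x = XX n y"
proof -
  have "x \<in> AA j \<longleftrightarrow> y \<in> AA j" if "j < n" for j
  proof -
    have "int (j*L) + int i \<in> int ` {..<n*L}" if "i < L" for i
    proof -
      have "j * L + i < n * L"
      proof -
        have "j * L + i < j * L + L" using that by simp
        also have "\<dots> = Suc j * L" by simp
        also have "\<dots> \<le> n * L" using \<open>j < n\<close> by (intro mult_le_mono1) simp
        finally show ?thesis .
      qed
      then show ?thesis by (metis image_eqI lessThan_iff of_nat_add)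
    qed
    then have eqxy: "x (int (j*L) + int i) = y (int (j*L) + int i)" if "i < L" for i
      using assms that by blast
    have "(\<forall>i<L. x (int (j*L) + int i) = w!i) \<longleftrightarrow> (\<forall>i<L. y (int (j*L) + int i) = w!i)"
      using eqxy by auto
    then show ?thesis unfolding AA_def cyl_def by simp
  qed
  then show ?thesis unfolding XX_def by (intro sum.cong refl) (simp add: indicator_def)
qed

lemma XX_abs: "\<bar>XX n x - real n * P\<bar> \<le> real n"
proof -
  have "0 \<le> real n * P" "real n * P \<le> real n"
    using P_bounds mult_left_le[of P "real n"] by auto
  then show ?thesis using XX_bounds[of n x] by (simp add: abs_le_iff)
qed

lemma GG_open: "openin cfg_top (GG n eps)"
proof (rule open_findep[of "int ` {..<n*L}"])
  fix x y assume "\<forall>j\<in>int ` {..<n*L}. x j = y j" "x \<in> GG n eps"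
  then show "y \<in> GG n eps" using XX_findep[of n x y] by (simp add: GG_def)
qed simp

lemma M_GG:
  assumes "n > 0" "eps > 0"
  shows "measure M (GG n eps) \<le> 1 / (real n * eps^2)"
proof -
  interpret prob_space M using bern_prob[OF B] .
  have [measurable]: "AA j \<in> sets M" for j by (rule AA_sets)
  have int: "integrable M (indicator (AA j) :: _ \<Rightarrow> real)" for j
    by (rule integrable_real_indicator) (auto simp: less_top[symmetric])
  have meas: "(\<lambda>x. XX n x - real n * P) \<in> borel_measurable M"
    unfolding XX_def by measurable
  have "integrable M (\<lambda>x. (XX n x - real n * P)^2)"
  proof -
    have "integrable M (\<lambda>x. (real n)^2)" by simp
    then show ?thesis
  proof (rule Bochner_Integration.integrable_bound)
    show "(\<lambda>x. (XX n x - real n * P)^2) \<in> borel_measurable M" using meas by measurable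
    show "AE x in M. norm ((XX n x - real n * P)^2) \<le> norm ((real n)^2)"
    proof (intro AE_I2)
      fix x
      have "\<bar>XX n x - real n * P\<bar> \<le> real n" by (rule XX_abs)
      then have "\<bar>XX n x - real n * P\<bar>^2 \<le> (real n)^2" by (rule power_mono) simp
      then show "norm ((XX n x - real n * P)^2) \<le> norm ((real n)^2)" by simp
    qed
  qed
  qed
  then have "measure M {x\<in>space M. \<bar>XX n x - real n * P\<bar> \<ge> real n * eps}
      \<le> (\<integral>x. (XX n x - real n * P)^2 \<partial>M) / (real n * eps)^2"
    using assms by (intro second_moment_method meas) auto
  also have "\<dots> = real n * (P - P*P) / (real n * eps)^2" by (simp add: second_moment)
  also have "\<dots> \<le> real n / (real n * eps)^2"
  proof -
    have "0 \<le> P * P" using P_bounds by simp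
    then have "P - P * P \<le> 1" using P_bounds by linarith
    then show ?thesis by (intro divide_right_mono mult_left_le) auto
  qed
  also have "\<dots> = 1 / (real n * eps^2)" using assms by (simp add: power2_eq_square)
  finally have *: "measure M {x\<in>space M. \<bar>XX n x - real n * P\<bar> \<ge> real n * eps} \<le> 1 / (real n * eps^2)" .
  have "measure M (GG n eps) \<le> measure M {x\<in>space M. \<bar>XX n x - real n * P\<bar> \<ge> real n * eps}"
  proof (intro finite_measure_mono)
    have sp: "space M = UNIV" using B by (simp add: bernoulli_measure_def borel_prob_def)
    show "GG n eps \<subseteq> {x\<in>space M. \<bar>XX n x - real n * P\<bar> \<ge> real n * eps}"
      by (auto simp: GG_def sp)
    show "{x\<in>space M. \<bar>XX n x - real n * P\<bar> \<ge> real n * eps} \<in> sets M"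
      using meas by measurable
  qed
  with * show ?thesis by linarith
qed

lemma nu_GG:
  assumes nu: "borel_prob \<nu>" and r: "\<And>i. measure \<nu> (cyl w i) = r" and "n > 0" and "eps \<ge> 0"
  shows "\<bar>r - P\<bar> \<le> eps + measure \<nu> (GG n eps)"
proof -
  interpret prob_space \<nu> using nu by (simp add: borel_prob_def)
  have [measurable]: "AA j \<in> sets \<nu>" for j
    unfolding AA_def by (rule open_in_sets[OF nu cyl_open])
  have G[measurable]: "GG n eps \<in> sets \<nu>" by (rule open_in_sets[OF nu GG_open])
  have int: "integrable \<nu> (indicator (AA j) :: _ \<Rightarrow> real)" for j
    by (rule integrable_real_indicator) (auto simp: less_top[symmetric])
  have intG: "integrable \<nu> (indicator (GG n eps) :: _ \<Rightarrow> real)"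
    by (rule integrable_real_indicator) (auto simp: less_top[symmetric])
  define f where "f x = XX n x - real n * P" for x
  have intf: "integrable \<nu> f" unfolding f_def XX_def using int by simp
  have intf': "integrable \<nu> (\<lambda>x. - f x)" using intf by simp
  have intg: "integrable \<nu> (\<lambda>x. real n * eps + real n * indicator (GG n eps) x)" using intG by simp
  have If: "(\<integral>x. f x \<partial>\<nu>) = real n * r - real n * P"
    unfolding f_def XX_def using int
    using nu prob_space by (simp add: Bochner_Integration.integral_sum AA_def r borel_prob_def)
  have Ig: "(\<integral>x. real n * eps + real n * indicator (GG n eps) x \<partial>\<nu>) = real n * eps + real n * measure \<nu> (GG n eps)"
    using intG by (simp add: prob_space)
  have bnd: "\<bar>f x\<bar> \<le> real n * eps + real n * indicator (GG n eps) x" for x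
  proof (cases "x \<in> GG n eps")
    case True
    have "\<bar>f x\<bar> \<le> real n"
      unfolding f_def by (rule XX_abs)
    moreover have "real n * eps \<ge> 0" using \<open>eps \<ge> 0\<close> by simp
    ultimately show ?thesis using True by simp
  next
    case False then show ?thesis by (simp add: GG_def f_def)
  qed
  have "(\<integral>x. f x \<partial>\<nu>) \<le> (\<integral>x. real n * eps + real n * indicator (GG n eps) x \<partial>\<nu>)"
    by (rule integral_mono[OF intf intg]) (use bnd abs_le_iff in blast)
  moreover have "(\<integral>x. - f x \<partial>\<nu>) \<le> (\<integral>x. real n * eps + real n * indicator (GG n eps) x \<partial>\<nu>)"
    by (rule integral_mono[OF intf' intg]) (use bnd abs_le_iff in blast)
  ultimately have "real n * \<bar>r - P\<bar> \<le> real n * (eps + measure \<nu> (GG n eps))"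
    using If Ig by (auto simp: abs_if algebra_simps)
  then show ?thesis using \<open>n > 0\<close> by simp
qed

end



lemma id_CA: "id \<in> CA"
  by (simp add: CA_def)

lemma delta_tri:
  assumes nu: "borel_prob \<nu>" and "a \<in> CA" "b \<in> CA" "c \<in> CA"
  shows "delta \<nu> a c \<le> delta \<nu> a b + delta \<nu> b c"
proof -
  interpret prob_space \<nu> using nu by (simp add: borel_prob_def)
  have s1: "{x. a x 0 \<noteq> b x 0} \<in> sets \<nu>" by (rule open_in_sets[OF nu CA_diff_open]) (use assms in auto)
  have s2: "{x. b x 0 \<noteq> c x 0} \<in> sets \<nu>" by (rule open_in_sets[OF nu CA_diff_open]) (use assms in auto)
  have "measure \<nu> {x. a x 0 \<noteq> c x 0} \<le> measure \<nu> ({x. a x 0 \<noteq> b x 0} \<union> {x. b x 0 \<noteq> c x 0})"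
    by (rule finite_measure_mono) (use s1 s2 in auto)
  also have "\<dots> \<le> measure \<nu> {x. a x 0 \<noteq> b x 0} + measure \<nu> {x. b x 0 \<noteq> c x 0}"
    by (rule measure_subadditive[OF s1 s2]) simp_all
  finally show ?thesis by (simp add: delta_def)
qed

lemma ball_open:
  assumes nu: "borel_prob \<nu>" and "eps > 0"
  shows "{d\<in>CA. delta \<nu> id d < eps} \<in> delta_open_sets \<nu>"
  unfolding delta_open_sets_def
proof (intro CollectI conjI ballI)
  fix c assume c: "c \<in> {d\<in>CA. delta \<nu> id d < eps}"
  show "\<exists>e>0. \<forall>d\<in>CA. delta \<nu> c d < e \<longrightarrow> d \<in> {d\<in>CA. delta \<nu> id d < eps}"
  proof (intro exI[of _ "eps - delta \<nu> id c"] conjI ballI impI)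
    show "0 < eps - delta \<nu> id c" using c by simp
    fix d assume "d \<in> CA" "delta \<nu> c d < eps - delta \<nu> id c"
    moreover have "delta \<nu> id d \<le> delta \<nu> id c + delta \<nu> c d"
      by (rule delta_tri[OF nu id_CA]) (use c \<open>d\<in>CA\<close> in auto)
    ultimately show "d \<in> {d\<in>CA. delta \<nu> id d < eps}" by auto
  qed
qed auto

lemma main_B:
  fixes p :: "'a::finite \<Rightarrow> real"
  assumes card: "CARD('a) \<ge> 2" and B: "bernoulli_measure p M" and nu: "borel_prob \<nu>"
    and r: "\<And>i. measure \<nu> (cyl w i) = r" and ne: "r \<noteq> prod_list (map p w)"
  shows "delta_open_sets M \<noteq> delta_open_sets \<nu>"
proof
  assume eq: "delta_open_sets M = delta_open_sets \<nu>"
  obtain a b :: 'a where ab: "a \<noteq> b"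
  proof -
    have "\<not> card (UNIV::'a set) \<le> Suc 0" using card by simp
    then show ?thesis using that card_le_Suc0_iff_eq[of "UNIV::'a set"] by auto
  qed
  define \<sigma> where "\<sigma> y = (if y = a then b else a)" for y
  have \<sigma>: "\<sigma> y \<noteq> y" for y using ab by (auto simp: \<sigma>_def)
  define eps where "eps = \<bar>r - prod_list (map p w)\<bar> / 2"
  have eps: "eps > 0" using ne by (simp add: eps_def)
  define U where "U = {d\<in>CA. delta \<nu> id d < eps}"
  have "U \<in> delta_open_sets M" unfolding eq U_def by (rule ball_open[OF nu eps])
  moreover have "id \<in> U" using eps id_CA by (simp add: U_def delta_def)
  ultimately obtain e where e: "e > 0" "\<And>d. d \<in> CA \<Longrightarrow> delta M id d < e \<Longrightarrow> d \<in> U"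
    unfolding delta_open_sets_def by blast
  define n where "n = nat \<lceil>1 / (e * eps^2)\<rceil> + 1"
  have n: "n > 0" by (simp add: n_def)
  have "1 / (e * eps^2) < real n" unfolding n_def by linarith
  then have "1 < real n * (e * eps^2)" using e eps by (simp add: field_simps)
  then have bnd: "1 / (real n * eps^2) < e" using e eps n by (simp add: field_simps)
  define G where "G = GG p w n eps"
  define c where "c x i = (if (\<lambda>k. x (k + i)) \<in> G then \<sigma> (x i) else x i)" for x i
  have c_CA: "c \<in> CA"
    unfolding CA_def
  proof (intro CollectI conjI allI)
    show "continuous_map cfg_top cfg_top c"
    proof (rule cont_findep[where J="\<lambda>i. insert i ((\<lambda>k. k + i) ` (int ` {..<n * length w}))"])
      fix i :: int and x y :: "int \<Rightarrow> 'a"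
      assume xy: "\<forall>j\<in>insert i ((\<lambda>k. k + i) ` (int ` {..<n * length w})). x j = y j"
      have "(\<lambda>k. x (k + i)) \<in> G \<longleftrightarrow> (\<lambda>k. y (k + i)) \<in> G"
      proof -
        have "\<forall>j\<in>int ` {..<n * length w}. x (j + i) = y (j + i)" using xy by auto
        then have "XX w n (\<lambda>k. x (k + i)) = XX w n (\<lambda>k. y (k + i))"
          using XX_findep[OF B, where w=w and n=n and x="\<lambda>k. x (k + i)" and y="\<lambda>k. y (k + i)"] by blast
        then show ?thesis by (simp add: G_def GG_def[OF B])
      qed
      then show "c x i = c y i" using xy by (simp add: c_def)
    qed simp
    fix x show "c (shift x) = shift (c x)"
      by (rule ext) (simp add: c_def shift_def add_ac)
  qed
  have cG: "{x. x 0 \<noteq> c x 0} = G" using \<sigma> by (auto simp: c_def) (metis \<sigma>)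
  have "delta M id c = measure M G" by (simp add: delta_def cG)
  also have "\<dots> \<le> 1 / (real n * eps^2)" unfolding G_def by (rule M_GG[OF B n eps])
  also have "\<dots> < e" by (rule bnd)
  finally have "c \<in> U" using e(2)[OF c_CA] by blast
  then have "measure \<nu> G < eps" by (simp add: U_def delta_def cG)
  moreover have "\<bar>r - prod_list (map p w)\<bar> \<le> eps + measure \<nu> G"
    unfolding G_def by (rule nu_GG[OF B nu r n]) (use eps in simp)
  ultimately show False by (simp add: eps_def)
qed



lemma part2:
  fixes p :: "'a::finite \<Rightarrow> real"
  assumes card: "CARD('a) \<ge> 2" and B: "bernoulli_measure p M" and nu: "borel_prob \<nu>"
    and si: "shift_invariant \<nu>" and ne: "\<nu> \<noteq> M"
  shows "delta_open_sets \<nu> \<noteq> delta_open_sets M"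
proof -
  have bM: "borel_prob M" using B by (simp add: bernoulli_measure_def)
  obtain w n where wn: "measure \<nu> (cyl w n) \<noteq> measure M (cyl w n)"
    using borel_eq[OF nu bM] ne by blast
  have r: "measure \<nu> (cyl w i) = measure \<nu> (cyl w 0)" for i by (rule shinv_cyl[OF nu si])
  have "measure \<nu> (cyl w 0) \<noteq> prod_list (map p w)"
    using wn r[of n] bern_cyl[OF B, of w n] by simp
  from main_B[OF card B nu r this] show ?thesis by metis
qed

theorem corollary5p4:
  assumes "CARD('a::finite) \<ge> 2"
  shows "(\<forall>(p::'a \<Rightarrow> real) q M N. bernoulli_measure p M \<and> bernoulli_measure q N \<and> M \<noteq> N
            \<longrightarrow> delta_open_sets M \<noteq> delta_open_sets N)
       \<and> (\<forall>(p::'a \<Rightarrow> real) M \<nu>. bernoulli_measure p M \<and> borel_prob \<nu> \<and> shift_invariant \<nu> \<and> \<nu> \<noteq> M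
            \<longrightarrow> delta_open_sets \<nu> \<noteq> delta_open_sets M)"
proof (intro conjI allI impI)
  fix p q :: "'a \<Rightarrow> real" and M N
  assume h: "bernoulli_measure p M \<and> bernoulli_measure q N \<and> M \<noteq> N"
  then have BM: "bernoulli_measure p M" and BN: "bernoulli_measure q N" and ne: "M \<noteq> N" by auto
  have bM: "borel_prob M" using BM by (simp add: bernoulli_measure_def)
  have bN: "borel_prob N" using BN by (simp add: bernoulli_measure_def)
  obtain w n where wn: "measure N (cyl w n) \<noteq> measure M (cyl w n)"
    using borel_eq[OF bN bM] ne by metis
  have r: "measure N (cyl w i) = prod_list (map q w)" for i by (rule bern_cyl[OF BN])
  have "prod_list (map q w) \<noteq> prod_list (map p w)"
    using wn r[of n] bern_cyl[OF BM, of w n] by simp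
  from main_B[OF assms BM bN r this] show "delta_open_sets M \<noteq> delta_open_sets N" .
next
  fix p :: "'a \<Rightarrow> real" and M \<nu>
  assume "bernoulli_measure p M \<and> borel_prob \<nu> \<and> shift_invariant \<nu> \<and> \<nu> \<noteq> M"
  then show "delta_open_sets \<nu> \<noteq> delta_open_sets M" using part2[OF assms] by blast
qed


end
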